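(* Let $\mathcal{L}$ be a linear space of random variables on $\Omega$ containing all constants, and let $P$ be a coherent$_1$ marginal prevision on $\mathcal{L}$. Then $P$ is a finitely additive expectation on $\mathcal{L}$.
   Context: Random variables are real-valued functions on a nonempty set $\Omega$; marginal previsions $P(X)$ are extended real numbers. Coherence$_1$ (marginal case): $\{P(X):X\in\mathcal{L}\}$ is coherent$_1$ if for all finitely many $X_1,\dots,X_n\in\mathcal{L}$, all real $\alpha_1,\dots,\alpha_n$ with $\alpha_j\ge0$ whenever $P(X_j)=+\infty$ and $\alpha_j\le0$ whenever $P(X_j)=-\infty$, and all real $c_1,\dots,c_n$ with $c_j=P(X_j)$ whenever it is finite, $\sup_\omega\sum_{j=1}^n\alpha_j[X_j(\omega)-c_j]\ge0$. A finitely additive expectation on $\mathcal{L}$ is a map $L:\mathcal{L}\to\mathbb{R}\cup\{\pm\infty\}$ that is nonnegative ($X\le Y$ implies $L(X)\le L(Y)$), extended-linear ($L(\alpha X+\beta Y)=\alpha L(X)+\beta L(Y)$ for all real $\alpha,\beta$ whenever the right side is not of the form $\infty-\infty$, with $0\times(\pm\infty)=0$), and satisfies $L(1)=1$. *)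

theory Defs
  imports "HOL-Library.Extended_Real"
begin

text \<open>Random variables on \<Omega> are functions of type 'a \<Rightarrow> real (the type 'a plays the
role of the nonempty set \<Omega>); previsions take values in ereal.\<close>

definition rv_linear_space :: "('a \<Rightarrow> real) set \<Rightarrow> bool" where
  "rv_linear_space L \<longleftrightarrow>
     (\<forall>X\<in>L. \<forall>Y\<in>L. \<forall>a b::real. (\<lambda>\<omega>. a * X \<omega> + b * Y \<omega>) \<in> L)"

definition contains_constants :: "('a \<Rightarrow> real) set \<Rightarrow> bool" where
  "contains_constants L \<longleftrightarrow> (\<forall>c::real. (\<lambda>_. c) \<in> L)"

definition coherent1 :: "('a \<Rightarrow> real) set \<Rightarrow> (('a \<Rightarrow> real) \<Rightarrow> ereal) \<Rightarrow> bool" where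
  "coherent1 L P \<longleftrightarrow>
     (\<forall>(n::nat) (X::nat \<Rightarrow> 'a \<Rightarrow> real) (\<alpha>::nat \<Rightarrow> real) (c::nat \<Rightarrow> real).
        (\<forall>j<n. X j \<in> L) \<and>
        (\<forall>j<n. P (X j) = \<infinity> \<longrightarrow> \<alpha> j \<ge> 0) \<and>
        (\<forall>j<n. P (X j) = -\<infinity> \<longrightarrow> \<alpha> j \<le> 0) \<and>
        (\<forall>j<n. \<bar>P (X j)\<bar> \<noteq> \<infinity> \<longrightarrow> ereal (c j) = P (X j))
        \<longrightarrow> (SUP \<omega>. ereal (\<Sum>j<n. \<alpha> j * (X j \<omega> - c j))) \<ge> 0)"

text \<open>Finitely additive expectation on L.  Note that in ereal, 0 * (+-\<infinity>) = 0.\<close>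
definition fa_expectation :: "('a \<Rightarrow> real) set \<Rightarrow> (('a \<Rightarrow> real) \<Rightarrow> ereal) \<Rightarrow> bool" where
  "fa_expectation L E \<longleftrightarrow>
     (\<forall>X\<in>L. \<forall>Y\<in>L. (\<forall>\<omega>. X \<omega> \<le> Y \<omega>) \<longrightarrow> E X \<le> E Y) \<and>
     (\<forall>X\<in>L. \<forall>Y\<in>L. \<forall>a b::real.
        \<not> ((ereal a * E X = \<infinity> \<and> ereal b * E Y = -\<infinity>) \<or>
           (ereal a * E X = -\<infinity> \<and> ereal b * E Y = \<infinity>))
        \<longrightarrow> E (\<lambda>\<omega>. a * X \<omega> + b * Y \<omega>) = ereal a * E X + ereal b * E Y) \<and>
     E (\<lambda>_. 1) = 1"

end

theory Submission
  imports Defs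
begin

definition pick :: "ereal \<Rightarrow> real \<Rightarrow> real" where
  "pick v t = (if \<bar>v\<bar> = \<infinity> then t else real_of_ereal v)"

lemma pick_fin: "\<bar>v\<bar> \<noteq> \<infinity> \<Longrightarrow> ereal (pick v t) = v"
  by (simp add: pick_def ereal_real')

lemma pick_inf: "\<bar>v\<bar> = \<infinity> \<Longrightarrow> pick v t = t"
  by (simp add: pick_def)

lemma keyK:
  assumes coh: "coherent1 L P" and XL: "X \<in> L" and YL: "Y \<in> L" and ZL: "Z \<in> L"
    and s1: "P X = \<infinity> \<Longrightarrow> a1 \<ge> 0" "P X = -\<infinity> \<Longrightarrow> a1 \<le> 0"
    and s2: "P Y = \<infinity> \<Longrightarrow> a2 \<ge> 0" "P Y = -\<infinity> \<Longrightarrow> a2 \<le> 0"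
    and s3: "P Z = \<infinity> \<Longrightarrow> a3 \<ge> 0" "P Z = -\<infinity> \<Longrightarrow> a3 \<le> 0"
    and bd: "\<And>\<omega>. a1 * X \<omega> + a2 * Y \<omega> + a3 * Z \<omega> \<le> d"
  shows "a1 * pick (P X) t1 + a2 * pick (P Y) t2 + a3 * pick (P Z) t3 \<le> d"
proof -
  define XX where "XX = (\<lambda>j::nat. if j = 0 then X else if j = 1 then Y else Z)"
  define al where "al = (\<lambda>j::nat. if j = 0 then a1 else if j = 1 then a2 else a3)"
  define cc where "cc = (\<lambda>j::nat. if j = 0 then pick (P X) t1 else if j = 1 then pick (P Y) t2 else pick (P Z) t3)"
  have l3: "\<And>j. j < (3::nat) \<longleftrightarrow> j = 0 \<or> j = 1 \<or> j = 2" by auto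
  have prem: "(\<forall>j<3. XX j \<in> L) \<and>
        (\<forall>j<3. P (XX j) = \<infinity> \<longrightarrow> al j \<ge> 0) \<and>
        (\<forall>j<3. P (XX j) = -\<infinity> \<longrightarrow> al j \<le> 0) \<and>
        (\<forall>j<3. \<bar>P (XX j)\<bar> \<noteq> \<infinity> \<longrightarrow> ereal (cc j) = P (XX j))"
    using XL YL ZL s1 s2 s3 unfolding l3 XX_def al_def cc_def
    by (simp add: pick_fin)
  from coh prem have "(SUP \<omega>. ereal (\<Sum>j<3. al j * (XX j \<omega> - cc j))) \<ge> 0"
    unfolding coherent1_def by blast
  moreover have "(SUP \<omega>. ereal (\<Sum>j<3. al j * (XX j \<omega> - cc j)))
      \<le> ereal (d - (a1 * pick (P X) t1 + a2 * pick (P Y) t2 + a3 * pick (P Z) t3))"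
  proof (rule SUP_least)
    fix \<omega>
    have "(\<Sum>j<3. al j * (XX j \<omega> - cc j)) = a1 * (X \<omega> - pick (P X) t1) + a2 * (Y \<omega> - pick (P Y) t2) + a3 * (Z \<omega> - pick (P Z) t3)"
      by (simp add: numeral_3_eq_3 lessThan_Suc XX_def al_def cc_def)
    also have "\<dots> \<le> d - (a1 * pick (P X) t1 + a2 * pick (P Y) t2 + a3 * pick (P Z) t3)"
      using bd[of \<omega>] by (simp add: algebra_simps)
    finally show "ereal (\<Sum>j<3. al j * (XX j \<omega> - cc j)) \<le> ereal (d - (a1 * pick (P X) t1 + a2 * pick (P Y) t2 + a3 * pick (P Z) t3))"
      by simp
  qed
  ultimately have "0 \<le> ereal (d - (a1 * pick (P X) t1 + a2 * pick (P Y) t2 + a3 * pick (P Z) t3))"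
    by (rule order_trans)
  then show ?thesis by simp
qed


lemma mono_part:
  assumes coh: "coherent1 L P" and XL: "X \<in> L" and YL: "Y \<in> L"
    and le: "\<forall>\<omega>. X \<omega> \<le> Y \<omega>"
  shows "P X \<le> P Y"
proof (rule ccontr)
  assume "\<not> P X \<le> P Y"
  hence lt: "P Y < P X" by simp
  hence n1: "P X \<noteq> -\<infinity>" and n2: "P Y \<noteq> \<infinity>" by auto
  have "1 * pick (P X) (pick (P Y) 0 + 1) + (-1) * pick (P Y) (pick (P X) 0 - 1) + 0 * pick (P X) 0 \<le> 0"
    by (rule keyK[OF coh XL YL XL]) (use n1 n2 le in auto)
  then show False using lt
    by (cases "P X"; cases "P Y") (auto simp: pick_def)
qed

lemma one_part:
  assumes coh: "coherent1 L P" and XL: "(\<lambda>_. 1) \<in> L"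
  shows "P (\<lambda>_. 1) = 1"
proof -
  let ?O = "\<lambda>_::'a. 1::real"
  have A: "pick (P ?O) t \<le> 1" if "P ?O \<noteq> -\<infinity>" for t
    using keyK[OF coh XL XL XL, of 1 0 0 1 t 0 0] that by auto
  have B: "- pick (P ?O) t \<le> -1" if "P ?O \<noteq> \<infinity>" for t
    using keyK[OF coh XL XL XL, of "-1" 0 0 "-1" t 0 0] that by auto
  show ?thesis
  proof (cases "P ?O")
    case (real r)
    then show ?thesis using A[of 0] B[of 0] by (auto simp: pick_def one_ereal_def)
  next
    case PInf
    then show ?thesis using A[of 2] by (auto simp: pick_def)
  next
    case MInf
    then show ?thesis using B[of 0] by (auto simp: pick_def)
  qed
qed

lemma fin_mult: "\<bar>ereal a * v\<bar> \<noteq> \<infinity> \<Longrightarrow> ereal a * v = ereal (a * pick v t)"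
  by (cases v) (auto simp: pick_def split: if_splits)

lemma fin_mult0: "\<bar>ereal a * v\<bar> \<noteq> \<infinity> \<Longrightarrow> \<bar>v\<bar> = \<infinity> \<Longrightarrow> a = 0"
  by (cases v) (auto split: if_splits)

lemma lin_fin:
  assumes coh: "coherent1 L P" and XL: "X \<in> L" and YL: "Y \<in> L" and ZL: "Z \<in> L"
    and Zd: "\<And>\<omega>. Z \<omega> = a * X \<omega> + b * Y \<omega>"
    and fa: "\<bar>ereal a * P X\<bar> \<noteq> \<infinity>" and fb: "\<bar>ereal b * P Y\<bar> \<noteq> \<infinity>"
  shows "P Z = ereal a * P X + ereal b * P Y"
proof -
  have sa: "P X = \<infinity> \<Longrightarrow> a = 0" "P X = -\<infinity> \<Longrightarrow> a = 0" using fin_mult0[OF fa] by auto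
  have sb: "P Y = \<infinity> \<Longrightarrow> b = 0" "P Y = -\<infinity> \<Longrightarrow> b = 0" using fin_mult0[OF fb] by auto
  let ?c1 = "pick (P X) 0" and ?c2 = "pick (P Y) 0"
  have D1: "a * ?c1 + b * ?c2 + (-1) * pick (P Z) t \<le> 0" if "P Z \<noteq> \<infinity>" for t
    by (rule keyK[OF coh XL YL ZL]) (use sa sb that Zd in auto)
  have D2: "(-a) * ?c1 + (-b) * ?c2 + 1 * pick (P Z) t \<le> 0" if "P Z \<noteq> -\<infinity>" for t
    by (rule keyK[OF coh XL YL ZL]) (use sa sb that Zd in auto)
  have e: "ereal a * P X + ereal b * P Y = ereal (a * ?c1 + b * ?c2)"
    using fin_mult[OF fa, of 0] fin_mult[OF fb, of 0] by simp
  show ?thesis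
  proof (cases "P Z")
    case (real r)
    then have "pick (P Z) 0 = r" by (simp add: pick_def)
    then show ?thesis using D1[of 0] D2[of 0] e real by simp
  next
    case PInf
    then have "pick (P Z) t = t" for t by (simp add: pick_inf)
    then show ?thesis using D2[of "a * ?c1 + b * ?c2 + 1"] PInf by simp
  next
    case MInf
    then have "pick (P Z) t = t" for t by (simp add: pick_inf)
    then show ?thesis using D1[of "a * ?c1 + b * ?c2 - 1"] MInf by simp
  qed
qed

lemma lin_inf:
  assumes coh: "coherent1 L P" and XL: "X \<in> L" and YL: "Y \<in> L" and ZL: "Z \<in> L"
    and Zd: "\<And>\<omega>. Z \<omega> = a * X \<omega> + b * Y \<omega>"
    and fa: "ereal a * P X = \<infinity>" and fb: "ereal b * P Y \<noteq> -\<infinity>"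
  shows "P Z = \<infinity>"
proof (rule ccontr)
  assume nz: "P Z \<noteq> \<infinity>"
  have sa: "(P X = \<infinity> \<and> a > 0) \<or> (P X = -\<infinity> \<and> a < 0)" using fa
    by (cases "P X") (auto split: if_splits)
  have sb: "P Y = \<infinity> \<Longrightarrow> b \<ge> 0" "P Y = -\<infinity> \<Longrightarrow> b \<le> 0" using fb
    by (auto split: if_splits)
  let ?c2 = "pick (P Y) 0" and ?c3 = "pick (P Z) 0"
  have D: "a * pick (P X) t + b * ?c2 + (-1) * ?c3 \<le> 0" for t
    by (rule keyK[OF coh XL YL ZL]) (use sa sb nz Zd in auto)
  have an: "a \<noteq> 0" using sa by auto
  have px: "pick (P X) t = t" for t using sa by (auto simp: pick_def)
  show False using D[of "(?c3 - b * ?c2 + 1) / a"] an by (simp add: px)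
qed

lemma lin_minf:
  assumes coh: "coherent1 L P" and XL: "X \<in> L" and YL: "Y \<in> L" and ZL: "Z \<in> L"
    and Zd: "\<And>\<omega>. Z \<omega> = a * X \<omega> + b * Y \<omega>"
    and fa: "ereal a * P X = -\<infinity>" and fb: "ereal b * P Y \<noteq> \<infinity>"
  shows "P Z = -\<infinity>"
proof (rule ccontr)
  assume nz: "P Z \<noteq> -\<infinity>"
  have sa: "(P X = \<infinity> \<and> a < 0) \<or> (P X = -\<infinity> \<and> a > 0)" using fa
    by (cases "P X") (auto split: if_splits)
  have sb: "P Y = \<infinity> \<Longrightarrow> b \<le> 0" "P Y = -\<infinity> \<Longrightarrow> b \<ge> 0" using fb
    by (auto split: if_splits)
  let ?c2 = "pick (P Y) 0" and ?c3 = "pick (P Z) 0"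
  have D: "(-a) * pick (P X) t + (-b) * ?c2 + 1 * ?c3 \<le> 0" for t
    by (rule keyK[OF coh XL YL ZL]) (use sa sb nz Zd in auto)
  have an: "a \<noteq> 0" using sa by auto
  have px: "pick (P X) t = t" for t using sa by (auto simp: pick_def)
  show False using D[of "(?c3 - b * ?c2 - 1) / a"] an by (simp add: px)
qed

theorem lemma5p4:
  fixes L :: "('a \<Rightarrow> real) set" and P :: "('a \<Rightarrow> real) \<Rightarrow> ereal"
  assumes "rv_linear_space L"
    and "contains_constants L"
    and "coherent1 L P"
  shows "fa_expectation L P"
  unfolding fa_expectation_def
proof (intro conjI ballI allI impI)
  fix X Y assume "X \<in> L" "Y \<in> L" "\<forall>\<omega>. X \<omega> \<le> Y \<omega>"
  then show "P X \<le> P Y" using mono_part[OF assms(3)] by blast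
next
  show "P (\<lambda>_. 1) = 1" using one_part[OF assms(3)] assms(2)
    unfolding contains_constants_def by blast
next
  fix X Y a b
  assume XL: "X \<in> L" and YL: "Y \<in> L"
    and nd: "\<not> ((ereal a * P X = \<infinity> \<and> ereal b * P Y = -\<infinity>) \<or>
           (ereal a * P X = -\<infinity> \<and> ereal b * P Y = \<infinity>))"
  define Z where "Z = (\<lambda>\<omega>. a * X \<omega> + b * Y \<omega>)"
  have ZL: "Z \<in> L" using assms(1) XL YL unfolding rv_linear_space_def Z_def by blast
  have Zd: "\<And>\<omega>. Z \<omega> = a * X \<omega> + b * Y \<omega>" by (simp add: Z_def)
  have Zd': "\<And>\<omega>. Z \<omega> = b * Y \<omega> + a * X \<omega>" by (simp add: Z_def)
  note coh = assms(3)
  have "P Z = ereal a * P X + ereal b * P Y"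
  proof (cases "ereal a * P X = \<infinity>")
    case True
    then show ?thesis using lin_inf[OF coh XL YL ZL Zd] nd by auto
  next
    case F1: False
    show ?thesis
    proof (cases "ereal a * P X = -\<infinity>")
      case True
      then show ?thesis using lin_minf[OF coh XL YL ZL Zd] nd by auto
    next
      case F2: False
      show ?thesis
      proof (cases "ereal b * P Y = \<infinity>")
        case True
        then show ?thesis using lin_inf[OF coh YL XL ZL Zd'] nd F2 by auto
      next
        case F3: False
        show ?thesis
        proof (cases "ereal b * P Y = -\<infinity>")
          case True
          then show ?thesis using lin_minf[OF coh YL XL ZL Zd'] nd F1 by auto
        next
          case False
          then show ?thesis using lin_fin[OF coh XL YL ZL Zd] F1 F2 F3
            by (metis ereal_infinity_cases)
        qed
      qed
    qed
  qed
  then show "P (\<lambda>\<omega>. a * X \<omega> + b * Y \<omega>) = ereal a * P X + ereal b * P Y"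
    by (simp add: Z_def)
qed

end
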